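(* In the setting described in the context, for every meta-epoch $t$, every round $r\in\{0,\dots,R-1\}$, every client $m\in S_t^{\lambda_r}$ and every $j\in\{0,\dots,N-1\}$, $$\mathbb{E}\big[\|x^{r,j+1}_{m,\star}-x_\star\|^2\big]\le\gamma^2\Big(\frac{MN^2}{2C^2}+2N^2\Big)\tilde\sigma_\star^2+\frac{\gamma^2N}{2}\sigma_\star^2,$$ where $\tilde\sigma_\star^2=\frac1M\sum_{m=1}^M\|\nabla f_m(x_\star)\|^2$ and $\sigma_\star^2=\frac{1}{MN}\sum_{m=1}^M\sum_{j}\|\nabla f_m^j(x_\star)\|^2$.
   Context: Setting. There are $M$ clients, each holding $N$ data points. For $m\in[M]$ and $j\in\{0,\dots,N-1\}$, $f_m^j:\mathbb{R}^d\to\mathbb{R}$ is differentiable. Define $f_m=\frac1N\sum_j f_m^j$ and $f=\frac1M\sum_m f_m$, and let $x_\star$ be a minimizer of $f$. Let $\gamma>0$ and let $C$ be a cohort size with $M=CR$ for an integer $R$. Random sampling. In meta-epoch $t$, the $M$ clients are partitioned uniformly at random into $R$ disjoint cohorts of size $C$, taken in a uniformly random order $S_t^{\lambda_0},\dots,S_t^{\lambda_{R-1}}$. Each client $m$ has an independent uniformly random permutation $\pi_m=(\pi_m^0,\dots,\pi_m^{N-1})$ of its data indices, independent of the partition. Star sequence. Set $x^0_\star=x_\star$. For each $r$ and each $m\in S_t^{\lambda_r}$, set $x^{r,0}_{m,\star}=x^r_\star$ and $x^{r,j+1}_{m,\star}=x^{r,j}_{m,\star}-\gamma\nabla f_m^{\pi_m^j}(x_\star)$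 for $j=0,\dots,N-1$, and then $x^{r+1}_\star=\frac1C\sum_{m\in S_t^{\lambda_r}}x^{r,N}_{m,\star}$. Expectation is over the random partition and permutations. *)

theory Defs
  imports "HOL-Analysis.Analysis" "HOL-Probability.Probability"
begin

definition grad :: "('a::real_inner \<Rightarrow> real) \<Rightarrow> 'a \<Rightarrow> 'a" where
  "grad F x = (THE D. GDERIV F x :> D)"

text \<open>Local star iterates of one client: start at x0, step j uses the
  vector h j (= gradient of the j-th sampled data point at x_star).\<close>
fun local_iter :: "real \<Rightarrow> (nat \<Rightarrow> 'a::real_vector) \<Rightarrow> 'a \<Rightarrow> nat \<Rightarrow> 'a" where
  "local_iter \<gamma> h x0 0 = x0"
| "local_iter \<gamma> h x0 (Suc j) = local_iter \<gamma> h x0 j - \<gamma> *\<^sub>R h j"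

definition client_steps ::
  "(nat \<Rightarrow> nat \<Rightarrow> 'a::real_inner \<Rightarrow> real) \<Rightarrow> 'a \<Rightarrow> (nat \<Rightarrow> nat \<Rightarrow> nat) \<Rightarrow> nat \<Rightarrow> nat \<Rightarrow> 'a" where
  "client_steps f xs \<pi> m k = grad (f m (\<pi> m k)) xs"

text \<open>Round iterates x^r_star. The random ordered partition into cohorts is
  encoded by a permutation sigma of {..<M}: cohort number r (i.e. S^{lambda_r})
  is sigma ` {r*C ..< r*C + C}.\<close>
fun star_round ::
  "real \<Rightarrow> nat \<Rightarrow> nat \<Rightarrow> (nat \<Rightarrow> nat \<Rightarrow> 'a::real_inner \<Rightarrow> real) \<Rightarrow> 'a
   \<Rightarrow> (nat \<Rightarrow> nat) \<Rightarrow> (nat \<Rightarrow> nat \<Rightarrow> nat) \<Rightarrow> nat \<Rightarrow> 'a" where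
  "star_round \<gamma> N C f xs \<sigma> \<pi> 0 = xs"
| "star_round \<gamma> N C f xs \<sigma> \<pi> (Suc r) =
     (1 / real C) *\<^sub>R
       (\<Sum>i<C. local_iter \<gamma> (client_steps f xs \<pi> (\<sigma> (r * C + i)))
                  (star_round \<gamma> N C f xs \<sigma> \<pi> r) N)"

text \<open>Sample space: uniformly random permutation sigma of the clients
  (giving the random ordered cohort partition) and independent uniformly
  random permutations pi m of {..<N} for each client m < M.\<close>
definition sample_space :: "nat \<Rightarrow> nat \<Rightarrow> ((nat \<Rightarrow> nat) \<times> (nat \<Rightarrow> nat \<Rightarrow> nat)) set" where
  "sample_space M N = {\<sigma>. \<sigma> permutes {..<M}} \<times> (PiE {..<M} (\<lambda>_. {p. p permutes {..<N}}))"

end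

theory Submission
  imports Defs
begin

lemma sum_perm_apply:
  assumes "p permutes {..<K}"
  shows "(\<Sum>j<K. h (p j)) = (\<Sum>b<K. h b)"
  using sum.permute[OF assms, of h] by (simp add: o_def)

lemma perm_single_sum:
  fixes F :: "nat \<Rightarrow> real"
  assumes k: "k < K"
  shows "real K * (\<Sum>p\<in>{p. p permutes {..<K}}. F (p k)) = fact K * (\<Sum>a<K. F a)"
proof -
  define T where "T k = (\<Sum>p\<in>{p. p permutes {..<K}}. F (p k))" for k
  have eq: "T k' = T k" if "k' < K" for k'
  proof -
    have tp: "Transposition.transpose k' k permutes {..<K}" using that k by (intro permutes_swap_id) auto
    have "T k' = (\<Sum>p\<in>{p. p permutes {..<K}}. F ((p \<circ> Transposition.transpose k' k) k'))"
      unfolding T_def by (rule sum_permutations_compose_right[OF tp])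
    also have "\<dots> = T k" unfolding T_def by simp
    finally show ?thesis .
  qed
  have "real K * T k = (\<Sum>k'<K. T k')" using eq by simp
  also have "\<dots> = (\<Sum>p\<in>{p. p permutes {..<K}}. \<Sum>k'<K. F (p k'))"
    unfolding T_def by (rule sum.swap)
  also have "\<dots> = (\<Sum>p\<in>{p. p permutes {..<K}}. \<Sum>a<K. F a)"
  proof (rule sum.cong[OF refl])
    fix p assume "p \<in> {p. p permutes {..<K}}"
    then have "p permutes {..<K}" by simp
    from sum.permute[OF this, of F] show "(\<Sum>k'<K. F (p k')) = (\<Sum>a<K. F a)" by (simp add: o_def)
  qed
  also have "\<dots> = fact K * (\<Sum>a<K. F a)" by (simp add: card_permutations)
  finally show ?thesis unfolding T_def .
qed

lemma perm_pair_sum: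
  fixes F :: "nat \<Rightarrow> nat \<Rightarrow> real"
  assumes k: "k < K" and k': "k' < K" and kk: "k \<noteq> k'"
  shows "real K * (real K - 1) * (\<Sum>p\<in>{p. p permutes {..<K}}. F (p k) (p k'))
       = fact K * ((\<Sum>a<K. \<Sum>b<K. F a b) - (\<Sum>a<K. F a a))"
proof -
  define T where "T j j' = (\<Sum>p\<in>{p. p permutes {..<K}}. F (p j) (p j'))" for j j'
  have eq: "T j j' = T k k'" if j: "j < K" "j' < K" "j \<noteq> j'" for j j'
  proof -
    define t1 where "t1 = Transposition.transpose j k"
    define t2 where "t2 = Transposition.transpose (t1 j') k'"
    have p1: "t1 permutes {..<K}" unfolding t1_def using j k by (intro permutes_swap_id) auto
    have "t1 j' < K" unfolding t1_def using j k by (auto simp: Transposition.transpose_def)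
    then have p2: "t2 permutes {..<K}" unfolding t2_def using k' by (intro permutes_swap_id) auto
    have tp: "t2 \<circ> t1 permutes {..<K}" by (rule permutes_compose[OF p1 p2])
    have t1j: "t1 j = k" unfolding t1_def by simp
    have t1j': "t1 j' \<noteq> k" unfolding t1_def using j by (auto simp: Transposition.transpose_def)
    have a1: "(t2 \<circ> t1) j = k" using t1j t1j' kk unfolding t2_def by (auto simp: Transposition.transpose_def)
    have a2: "(t2 \<circ> t1) j' = k'" unfolding t2_def by simp
    have "T j j' = (\<Sum>p\<in>{p. p permutes {..<K}}. F ((p \<circ> (t2 \<circ> t1)) j) ((p \<circ> (t2 \<circ> t1)) j'))"
      unfolding T_def by (rule sum_permutations_compose_right[OF tp])
    also have "\<dots> = T k k'" unfolding T_def using a1 a2 by (simp del: comp_apply add: comp_def)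
    finally show ?thesis .
  qed
  have "real K * (real K - 1) * T k k' = (\<Sum>j<K. \<Sum>j'\<in>{..<K}-{j}. T j j')"
  proof -
    have "(\<Sum>j<K. \<Sum>j'\<in>{..<K}-{j}. T j j') = (\<Sum>j<K. \<Sum>j'\<in>{..<K}-{j}. T k k')"
      by (intro sum.cong refl) (auto intro!: eq)
    also have "\<dots> = (\<Sum>j<K. (real K - 1) * T k k')"
      by (intro sum.cong refl) (simp add: card_Diff_subset of_nat_diff)
    also have "\<dots> = real K * (real K - 1) * T k k'" by simp
    finally show ?thesis by simp
  qed
  also have "\<dots> = (\<Sum>p\<in>{p. p permutes {..<K}}. \<Sum>j<K. \<Sum>j'\<in>{..<K}-{j}. F (p j) (p j'))"
  proof -
    have "(\<Sum>j<K. \<Sum>j'\<in>{..<K}-{j}. T j j') = (\<Sum>j<K. \<Sum>p\<in>{p. p permutes {..<K}}. \<Sum>j'\<in>{..<K}-{j}. F (p j) (p j'))"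
      unfolding T_def by (intro sum.cong refl) (rule sum.swap)
    also have "\<dots> = (\<Sum>p\<in>{p. p permutes {..<K}}. \<Sum>j<K. \<Sum>j'\<in>{..<K}-{j}. F (p j) (p j'))"
      by (rule sum.swap)
    finally show ?thesis .
  qed
  also have "\<dots> = (\<Sum>p\<in>{p. p permutes {..<K}}. (\<Sum>a<K. \<Sum>b<K. F a b) - (\<Sum>a<K. F a a))"
  proof (rule sum.cong[OF refl])
    fix p assume "p \<in> {p. p permutes {..<K}}"
    then have pp: "p permutes {..<K}" by simp
    have "(\<Sum>j<K. \<Sum>j'\<in>{..<K}-{j}. F (p j) (p j')) = (\<Sum>j<K. (\<Sum>j'<K. F (p j) (p j')) - F (p j) (p j))"
      by (intro sum.cong refl) (simp add: sum_diff1)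
    also have "\<dots> = (\<Sum>j<K. \<Sum>j'<K. F (p j) (p j')) - (\<Sum>j<K. F (p j) (p j))"
      by (simp add: sum_subtractf)
    also have "(\<Sum>j<K. \<Sum>j'<K. F (p j) (p j')) = (\<Sum>j<K. \<Sum>b<K. F (p j) b)"
      by (simp add: sum_perm_apply[OF pp])
    also have "\<dots> = (\<Sum>a<K. \<Sum>b<K. F a b)"
      using sum.permute[OF pp, of "\<lambda>a. \<Sum>b<K. F a b"] by (simp add: o_def)
    also have "(\<Sum>j<K. F (p j) (p j)) = (\<Sum>a<K. F a a)"
      using sum.permute[OF pp, of "\<lambda>a. F a a"] by (simp add: o_def)
    finally show "(\<Sum>j<K. \<Sum>j'\<in>{..<K}-{j}. F (p j) (p j')) = (\<Sum>a<K. \<Sum>b<K. F a b) - (\<Sum>a<K. F a a)" .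
  qed
  also have "\<dots> = fact K * ((\<Sum>a<K. \<Sum>b<K. F a b) - (\<Sum>a<K. F a a))" by (simp add: card_permutations)
  finally show ?thesis unfolding T_def .
qed

lemma perm_partial_norm:
  fixes v :: "nat \<Rightarrow> 'a::real_inner"
  assumes nK: "n \<le> K"
  shows "real K * (real K - 1) * (\<Sum>p\<in>{p. p permutes {..<K}}. (norm (\<Sum>l<n. v (p l)))\<^sup>2)
     = fact K * (real n * (real K - 1) * (\<Sum>a<K. (norm (v a))\<^sup>2)
         + real n * (real n - 1) * ((norm (\<Sum>a<K. v a))\<^sup>2 - (\<Sum>a<K. (norm (v a))\<^sup>2)))"
proof -
  let ?P = "{p. p permutes {..<K}}"
  define D where "D = (\<Sum>a<K. (norm (v a))\<^sup>2)"
  have e1: "(norm (\<Sum>l<n. v (p l)))\<^sup>2 = (\<Sum>l<n. v (p l) \<bullet> v (p l)) + (\<Sum>l<n. \<Sum>l'\<in>{..<n}-{l}. v (p l) \<bullet> v (p l'))" for p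
  proof -
    have "(norm (\<Sum>l<n. v (p l)))\<^sup>2 = (\<Sum>l<n. \<Sum>l'<n. v (p l) \<bullet> v (p l'))"
      by (simp add: power2_norm_eq_inner inner_sum_left inner_sum_right) (rule sum.swap)
    also have "\<dots> = (\<Sum>l<n. v (p l) \<bullet> v (p l) + (\<Sum>l'\<in>{..<n}-{l}. v (p l) \<bullet> v (p l')))"
      by (intro sum.cong refl) (simp add: sum.remove)
    finally show ?thesis by (simp add: sum.distrib)
  qed
  have s1: "real K * (real K - 1) * (\<Sum>p\<in>?P. \<Sum>l<n. v (p l) \<bullet> v (p l)) = fact K * (real n * (real K - 1) * D)"
  proof -
    have "real K * (real K - 1) * (\<Sum>p\<in>?P. \<Sum>l<n. v (p l) \<bullet> v (p l))
        = (real K - 1) * (\<Sum>l<n. real K * (\<Sum>p\<in>?P. v (p l) \<bullet> v (p l)))"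
      by (simp add: sum.swap[of _ ?P] sum_distrib_left mult.assoc mult.left_commute)
    also have "\<dots> = (real K - 1) * (\<Sum>l<n. fact K * D)"
      unfolding D_def using nK
      by (intro arg_cong[where f="\<lambda>x. (real K - 1) * x"] sum.cong refl)
         (simp add: perm_single_sum[where F="\<lambda>a. v a \<bullet> v a"] power2_norm_eq_inner)
    also have "\<dots> = fact K * (real n * (real K - 1) * D)" by simp
    finally show ?thesis .
  qed
  have s2: "real K * (real K - 1) * (\<Sum>p\<in>?P. \<Sum>l<n. \<Sum>l'\<in>{..<n}-{l}. v (p l) \<bullet> v (p l'))
      = fact K * (real n * (real n - 1) * ((norm (\<Sum>a<K. v a))\<^sup>2 - D))"
  proof -
    have "(\<Sum>p\<in>?P. \<Sum>l<n. \<Sum>l'\<in>{..<n}-{l}. v (p l) \<bullet> v (p l'))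
        = (\<Sum>l<n. \<Sum>l'\<in>{..<n}-{l}. \<Sum>p\<in>?P. v (p l) \<bullet> v (p l'))"
      by (subst sum.swap) (intro sum.cong refl, rule sum.swap)
    then have "real K * (real K - 1) * (\<Sum>p\<in>?P. \<Sum>l<n. \<Sum>l'\<in>{..<n}-{l}. v (p l) \<bullet> v (p l'))
        = (\<Sum>l<n. \<Sum>l'\<in>{..<n}-{l}. real K * (real K - 1) * (\<Sum>p\<in>?P. v (p l) \<bullet> v (p l')))"
      by (simp add: sum_distrib_left)
    also have "\<dots> = (\<Sum>l<n. \<Sum>l'\<in>{..<n}-{l}. fact K * ((norm (\<Sum>a<K. v a))\<^sup>2 - D))"
    proof (intro sum.cong refl)
      fix l l' assume "l \<in> {..<n}" "l' \<in> {..<n} - {l}"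
      then have "l < K" "l' < K" "l \<noteq> l'" using nK by auto
      from perm_pair_sum[OF this, of "\<lambda>a b. v a \<bullet> v b"]
      show "real K * (real K - 1) * (\<Sum>p\<in>?P. v (p l) \<bullet> v (p l')) = fact K * ((norm (\<Sum>a<K. v a))\<^sup>2 - D)"
        unfolding D_def by (simp add: power2_norm_eq_inner inner_sum_left inner_sum_right) (rule sum.swap)
    qed
    also have "\<dots> = fact K * (real n * (real n - 1) * ((norm (\<Sum>a<K. v a))\<^sup>2 - D))"
      by (simp add: card_Diff_subset of_nat_diff)
    finally show ?thesis .
  qed
  have "(\<Sum>p\<in>?P. (norm (\<Sum>l<n. v (p l)))\<^sup>2) = (\<Sum>p\<in>?P. \<Sum>l<n. v (p l) \<bullet> v (p l)) + (\<Sum>p\<in>?P. \<Sum>l<n. \<Sum>l'\<in>{..<n}-{l}. v (p l) \<bullet> v (p l'))"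
    by (simp add: e1 sum.distrib)
  then show ?thesis using s1 s2 unfolding D_def[symmetric] by (simp add: algebra_simps)
qed


lemma gderiv_exists:
  fixes F :: "'a::euclidean_space \<Rightarrow> real"
  assumes "F differentiable (at x)"
  shows "\<exists>D. GDERIV F x :> D"
proof -
  from assms obtain F' where d: "(F has_derivative F') (at x)" unfolding differentiable_def by blast
  then have lin: "linear F'" by (rule has_derivative_linear)
  define D where "D = (\<Sum>b\<in>Basis. F' b *\<^sub>R b)"
  have "F' h = h \<bullet> D" for h
  proof -
    have "F' h = F' (\<Sum>b\<in>Basis. (h \<bullet> b) *\<^sub>R b)" by (simp add: euclidean_representation)
    also have "\<dots> = (\<Sum>b\<in>Basis. (h \<bullet> b) * F' b)"
      using lin by (simp add: linear_sum linear_scale)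
    also have "\<dots> = h \<bullet> D" unfolding D_def by (simp add: inner_sum_right mult.commute)
    finally show ?thesis .
  qed
  then have "F' = (\<lambda>h. h \<bullet> D)" by auto
  with d show ?thesis unfolding gderiv_def by auto
qed

lemma gderiv_grad:
  fixes F :: "'a::euclidean_space \<Rightarrow> real"
  assumes "GDERIV F x :> D"
  shows "grad F x = D"
  unfolding grad_def
proof (rule the_equality[where P="\<lambda>D. GDERIV F x :> D", OF assms])
  fix D' assume "GDERIV F x :> D'"
  with assms have "(\<lambda>h. h \<bullet> D) = (\<lambda>h. h \<bullet> D')"
    unfolding gderiv_def by (rule has_derivative_unique)
  then have "(D' - D) \<bullet> D = (D' - D) \<bullet> D'" by metis
  then have "(D' - D) \<bullet> (D' - D) = 0" by (simp add: inner_diff_right)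
  then show "D' = D" by simp
qed

lemma grad_GDERIV:
  fixes F :: "'a::euclidean_space \<Rightarrow> real"
  assumes "F differentiable (at x)"
  shows "GDERIV F x :> grad F x"
  using gderiv_exists[OF assms] gderiv_grad by metis

lemma GDERIV_sum:
  fixes F :: "'i \<Rightarrow> 'a::real_inner \<Rightarrow> real"
  assumes "finite A" "\<And>k. k \<in> A \<Longrightarrow> GDERIV (F k) x :> D k"
  shows "GDERIV (\<lambda>x. \<Sum>k\<in>A. F k x) x :> (\<Sum>k\<in>A. D k)"
  using assms
proof (induction A rule: finite_induct)
  case empty
  then show ?case by (simp add: GDERIV_const)
next
  case (insert a A)
  then show ?case by (simp add: GDERIV_add)
qed

lemma GDERIV_cmult:
  fixes F :: "'a::real_inner \<Rightarrow> real"
  assumes "GDERIV F x :> D"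
  shows "GDERIV (\<lambda>x. c * F x) x :> c *\<^sub>R D"
  using GDERIV_mult[OF GDERIV_const assms, of c] by simp

lemma local_iter_eq:
  "local_iter \<gamma> h x0 n = x0 - \<gamma> *\<^sub>R (\<Sum>k<n. h k)"
  by (induction n) (simp_all add: algebra_simps)

lemma sum_lessThan_add_nat:
  "(\<Sum>l<a + (b::nat). h l) = (\<Sum>l<a. h l) + (\<Sum>i<b. h (a + i))"
  by (induction b) (simp_all add: add.assoc)


lemma star_round_eq:
  fixes f :: "nat \<Rightarrow> nat \<Rightarrow> 'a::real_inner \<Rightarrow> real"
  assumes \<sigma>: "\<sigma> permutes {..<M}" and \<pi>: "\<And>m. m < M \<Longrightarrow> \<pi> m permutes {..<N}"
    and Np: "N > 0" and Cp: "C > 0"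
  shows "r * C \<le> M \<Longrightarrow> star_round \<gamma> N C f xs \<sigma> \<pi> r
     = xs - (\<gamma> * real N / real C) *\<^sub>R (\<Sum>l<r*C. (1 / real N) *\<^sub>R (\<Sum>k<N. grad (f (\<sigma> l) k) xs))"
proof (induction r)
  case 0
  then show ?case by simp
next
  case (Suc r)
  define S where "S i = (\<Sum>k<N. grad (f (\<sigma> (r*C+i)) k) xs)" for i
  define x where "x = star_round \<gamma> N C f xs \<sigma> \<pi> r"
  have rC: "r * C \<le> M" using Suc.prems by simp
  have IH: "x = xs - (\<gamma> * real N / real C) *\<^sub>R (\<Sum>l<r*C. (1 / real N) *\<^sub>R (\<Sum>k<N. grad (f (\<sigma> l) k) xs))"
    unfolding x_def by (rule Suc.IH[OF rC])
  have li: "local_iter \<gamma> (client_steps f xs \<pi> (\<sigma> (r * C + i))) x N = x - \<gamma> *\<^sub>R S i" if i: "i < C" for i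
  proof -
    have "r * C + i < M" using Suc.prems i by simp
    then have "\<sigma> (r * C + i) < M" using permutes_in_image[OF \<sigma>] by simp
    then have pp: "\<pi> (\<sigma> (r * C + i)) permutes {..<N}" by (rule \<pi>)
    show ?thesis unfolding local_iter_eq client_steps_def S_def
      using sum_perm_apply[OF pp, of "\<lambda>k. grad (f (\<sigma> (r * C + i)) k) xs"] by simp
  qed
  have "star_round \<gamma> N C f xs \<sigma> \<pi> (Suc r) = (1 / real C) *\<^sub>R (\<Sum>i<C. x - \<gamma> *\<^sub>R S i)"
    by (simp add: x_def[symmetric] li)
  also have "\<dots> = x - (\<gamma> / real C) *\<^sub>R (\<Sum>i<C. S i)"
    using Cp by (simp add: sum_subtractf scaleR_sum_right[symmetric] algebra_simps sum_constant_scaleR)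
  also have "\<dots> = xs - (\<gamma> * real N / real C) *\<^sub>R (\<Sum>l<Suc r*C. (1 / real N) *\<^sub>R (\<Sum>k<N. grad (f (\<sigma> l) k) xs))"
  proof -
    have sp: "(\<Sum>l<Suc r*C. h l) = (\<Sum>l<r*C. h l) + (\<Sum>i<C. h (r*C+i))" for h :: "nat \<Rightarrow> 'a"
      using sum_lessThan_add_nat[of h "r*C" C] by (simp add: add.commute)
    show ?thesis
      using Np unfolding IH sp by (simp add: S_def scaleR_sum_right[symmetric] algebra_simps)
  qed
  finally show ?case .
qed

lemma grad_zero_sum:
  fixes f :: "nat \<Rightarrow> nat \<Rightarrow> 'a::euclidean_space \<Rightarrow> real"
  assumes Mp: "M > 0" and Np: "N > 0"
    and diff: "\<And>m j x. m < M \<Longrightarrow> j < N \<Longrightarrow> f m j differentiable (at x)"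
    and minimizer: "\<And>x. (1 / real M) * (\<Sum>m<M. (1 / real N) * (\<Sum>j<N. f m j xs))
                       \<le> (1 / real M) * (\<Sum>m<M. (1 / real N) * (\<Sum>j<N. f m j x))"
  shows "(\<Sum>m<M. \<Sum>k<N. grad (f m k) xs) = 0"
proof -
  define F where "F x = (1 / real M) * (\<Sum>m<M. (1 / real N) * (\<Sum>j<N. f m j x))" for x
  define D where "D = (1 / real M) *\<^sub>R (\<Sum>m<M. (1 / real N) *\<^sub>R (\<Sum>j<N. grad (f m j) xs))"
  have "GDERIV F xs :> D"
    unfolding F_def D_def
    by (intro GDERIV_cmult GDERIV_sum grad_GDERIV diff finite_lessThan) auto
  then have "(F has_derivative (\<lambda>h. h \<bullet> D)) (at xs)" by (simp add: gderiv_def)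
  from differential_zero_maxmin[OF _ open_UNIV this] minimizer
  have "(\<lambda>h. h \<bullet> D) = (\<lambda>v. 0)" unfolding F_def by auto
  then have "D \<bullet> D = 0" by metis
  then have D0: "D = 0" by simp
  have "D = (1 / (real M * real N)) *\<^sub>R (\<Sum>m<M. \<Sum>k<N. grad (f m k) xs)"
    unfolding D_def by (simp add: scaleR_sum_right[symmetric])
  with D0 Mp Np show ?thesis by simp
qed

lemma sum_PiE_component:
  fixes H :: "'b \<Rightarrow> real"
  assumes I: "finite I" "m \<in> I" and S: "finite S"
  shows "(\<Sum>\<pi>\<in>PiE I (\<lambda>_. S). H (\<pi> m)) = real (card S) ^ (card I - 1) * (\<Sum>p\<in>S. H p)"
proof -
  have fin: "finite (PiE I (\<lambda>_. S))" using I S by (simp add: finite_PiE)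
  have "(\<Sum>\<pi>\<in>PiE I (\<lambda>_. S). H (\<pi> m)) = (\<Sum>p\<in>S. \<Sum>\<pi>\<in>{\<pi>\<in>PiE I (\<lambda>_. S). \<pi> m = p}. H (\<pi> m))"
    by (rule sum.group[symmetric, OF fin S]) (use I in auto)
  also have "\<dots> = (\<Sum>p\<in>S. real (card S) ^ (card I - 1) * H p)"
  proof (rule sum.cong[OF refl])
    fix p assume p: "p \<in> S"
    have eq: "{\<pi>\<in>PiE I (\<lambda>_. S). \<pi> m = p} = PiE I (\<lambda>i. if i = m then {p} else S)"
      using p I by (auto simp: PiE_iff extensional_def; metis singletonD)
    have "card (PiE I (\<lambda>i. if i = m then {p} else S)) = (\<Prod>i\<in>I. card (if i = m then {p} else S))"
      using I by (simp add: card_PiE)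
    also have "\<dots> = (\<Prod>i\<in>I - {m}. card S)"
    proof -
      have "(\<Prod>i\<in>I. card (if i = m then {p} else S)) = card (if m = m then {p} else S) * (\<Prod>i\<in>I - {m}. card (if i = m then {p} else S))"
        using I by (rule prod.remove)
      also have "\<dots> = (\<Prod>i\<in>I - {m}. card S)" 
      proof -
        have "(\<Prod>i\<in>I - {m}. card (if i = m then {p} else S)) = (\<Prod>i\<in>I - {m}. card S)"
          by (rule prod.cong) auto
        then show ?thesis by simp
      qed
      finally show ?thesis .
    qed
    also have "\<dots> = card S ^ (card I - 1)" using I by simp
    finally have c: "card {\<pi>\<in>PiE I (\<lambda>_. S). \<pi> m = p} = card S ^ (card I - 1)" using eq by simp
    have "(\<Sum>\<pi>\<in>{\<pi>\<in>PiE I (\<lambda>_. S). \<pi> m = p}. H (\<pi> m)) = (\<Sum>\<pi>\<in>{\<pi>\<in>PiE I (\<lambda>_. S). \<pi> m = p}. H p)"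
      by (rule sum.cong) auto
    also have "\<dots> = real (card S) ^ (card I - 1) * H p" using c by simp
    finally show "(\<Sum>\<pi>\<in>{\<pi>\<in>PiE I (\<lambda>_. S). \<pi> m = p}. H (\<pi> m)) = real (card S) ^ (card I - 1) * H p" .
  qed
  also have "\<dots> = real (card S) ^ (card I - 1) * (\<Sum>p\<in>S. H p)" by (simp add: sum_distrib_left)
  finally show ?thesis .
qed


lemma perm_partial_bound:
  fixes v :: "nat \<Rightarrow> 'a::real_inner"
  assumes nK: "n \<le> K" and Kp: "K > 0"
  shows "(\<Sum>p\<in>{p. p permutes {..<K}}. (norm (\<Sum>l<n. v (p l)))\<^sup>2)
     \<le> fact K * (real n ^ 2 * (norm ((1 / real K) *\<^sub>R (\<Sum>a<K. v a)))\<^sup>2 + (1/2) * (\<Sum>a<K. (norm (v a))\<^sup>2))"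
proof -
  let ?P = "{p. p permutes {..<K}}"
  define D where "D = (\<Sum>a<K. (norm (v a))\<^sup>2)"
  define S2 where "S2 = (norm (\<Sum>a<K. v a))\<^sup>2"
  have D0: "D \<ge> 0" unfolding D_def by (simp add: sum_nonneg)
  have S0: "S2 \<ge> 0" unfolding S2_def by simp
  have fK: "fact K > (0::real)" by simp
  have nrm: "(norm ((1 / real K) *\<^sub>R (\<Sum>a<K. v a)))\<^sup>2 = S2 / (real K)^2"
    unfolding S2_def by (simp add: power_divide)
  show ?thesis
  proof (cases "K = 1")
    case True
    show ?thesis
    proof (cases "n = 0")
      case True
      then show ?thesis using D0 S0 by (simp add: nrm D_def[symmetric])
    next
      case False
      with nK \<open>K = 1\<close> have n1: "n = 1" by simp
      have "real K * (\<Sum>p\<in>?P. (norm (v (p 0)))\<^sup>2) = fact K * (\<Sum>a<K. (norm (v a))\<^sup>2)"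
        using Kp by (rule perm_single_sum)
      then have "(\<Sum>p\<in>?P. (norm (v (p 0)))\<^sup>2) = S2" using \<open>K = 1\<close> unfolding S2_def by simp
      moreover have "S2 = (norm (v 0))\<^sup>2" unfolding S2_def using \<open>K = 1\<close> by simp
      ultimately show ?thesis using n1 \<open>K = 1\<close> D0 by (simp add: nrm)
    qed
  next
    case False
    with Kp have K2: "real K \<ge> 2" by simp
    have id: "real K * (real K - 1) * (\<Sum>p\<in>?P. (norm (\<Sum>l<n. v (p l)))\<^sup>2)
       = fact K * (real n * (real K - real n) * D + real n * (real n - 1) * S2)"
      using perm_partial_norm[OF nK, of v] unfolding D_def[symmetric] S2_def[symmetric]
      by (simp add: algebra_simps)
    have nK': "real n \<le> real K" using nK by simp
    have i1: "real n * (real K - real n) \<le> real K * (real K - 1) / 2"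
    proof -
      have "real n * (real K - real n) \<le> (real K)^2 / 4"
      proof -
        have "(real K)^2 / 4 - real n * (real K - real n) = (real K - 2 * real n)^2 / 4"
          by (simp add: power2_eq_square algebra_simps)
        moreover have "(real K - 2 * real n)^2 / 4 \<ge> 0" by simp
        ultimately show ?thesis by linarith
      qed
      also have "\<dots> \<le> real K * (real K - 1) / 2" using K2 by (simp add: power2_eq_square field_simps)
      finally show ?thesis .
    qed
    have i2: "real n * (real n - 1) \<le> real K * (real K - 1) * (real n ^ 2 / (real K)^2)"
    proof -
      have "real K * (real K - 1) * (real n ^ 2 / (real K)^2) = (real K - 1) * real n ^ 2 / real K"
        using K2 by (simp add: power2_eq_square field_simps)
      moreover have nnK: "real n * (real n - 1) * real K \<le> (real K - 1) * real n ^ 2"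
      proof -
        have "real n * (real n - 1) * real K - (real K - 1) * real n ^ 2 = real n * (real n - real K)"
          by (simp add: power2_eq_square algebra_simps)
        moreover have "real n * (real n - real K) \<le> 0" using nK' by (simp add: mult_nonneg_nonpos)
        ultimately show ?thesis by linarith
      qed
      moreover have "real n * (real n - 1) \<le> (real K - 1) * real n ^ 2 / real K"
        using nnK K2
        by (subst pos_le_divide_eq) auto
      ultimately show ?thesis by linarith
    qed
    have "real n * (real K - real n) * D + real n * (real n - 1) * S2
        \<le> real K * (real K - 1) * (real n ^ 2 * (S2 / (real K)^2) + (1/2) * D)"
    proof -
      have "real n * (real K - real n) * D \<le> real K * (real K - 1) / 2 * D" by (rule mult_right_mono[OF i1 D0])
      moreover have "real n * (real n - 1) * S2 \<le> real K * (real K - 1) * (real n ^ 2 / (real K)^2) * S2"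
        by (rule mult_right_mono[OF i2 S0])
      ultimately show ?thesis by (simp add: algebra_simps)
    qed
    then have "fact K * (real n * (real K - real n) * D + real n * (real n - 1) * S2)
        \<le> fact K * (real K * (real K - 1) * (real n ^ 2 * (S2 / (real K)^2) + (1/2) * D))"
      using fK by simp
    then have "real K * (real K - 1) * (\<Sum>p\<in>?P. (norm (\<Sum>l<n. v (p l)))\<^sup>2)
        \<le> real K * (real K - 1) * (fact K * (real n ^ 2 * (S2 / (real K)^2) + (1/2) * D))"
    proof -
      have eq2: "real K * (real K - 1) * (fact K * (real n ^ 2 * (S2 / (real K)^2) + (1/2) * D))
          = fact K * (real K * (real K - 1) * (real n ^ 2 * (S2 / (real K)^2) + (1/2) * D))"
        by (simp add: ac_simps)
      show ?thesis using id eq2 \<open>fact K * (real n * (real K - real n) * D + real n * (real n - 1) * S2)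
        \<le> fact K * (real K * (real K - 1) * (real n ^ 2 * (S2 / (real K)^2) + (1/2) * D))\<close> by linarith
    qed
    moreover have "real K * (real K - 1) > 0" using K2 by simp
    ultimately have "(\<Sum>p\<in>?P. (norm (\<Sum>l<n. v (p l)))\<^sup>2) \<le> fact K * (real n ^ 2 * (S2 / (real K)^2) + (1/2) * D)"
      by (rule mult_left_le_imp_le)
    then show ?thesis unfolding nrm D_def[symmetric] .
  qed
qed


lemma norm_add_sq:
  fixes a b :: "'a::real_inner"
  shows "(norm (a + b))\<^sup>2 = (norm a)\<^sup>2 + 2 * (a \<bullet> b) + (norm b)\<^sup>2"
  by (simp add: power2_norm_eq_inner inner_add_left inner_add_right inner_commute)

lemma inner_step:
  fixes u :: "'a::real_inner" and w :: "nat \<Rightarrow> 'a"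
  assumes nK: "n \<le> K" and Kp: "K > 0"
  shows "(\<Sum>p\<in>{p. p permutes {..<K}}. (norm (u + \<gamma> *\<^sub>R (\<Sum>l<n. w (p l))))\<^sup>2)
    \<le> fact K * ((norm u)\<^sup>2 + 2 * \<gamma> * real n * (u \<bullet> ((1 / real K) *\<^sub>R (\<Sum>a<K. w a)))
        + \<gamma>\<^sup>2 * (real n ^ 2 * (norm ((1 / real K) *\<^sub>R (\<Sum>a<K. w a)))\<^sup>2 + (1/2) * (\<Sum>a<K. (norm (w a))\<^sup>2)))"
proof -
  let ?P = "{p. p permutes {..<K}}"
  define c where "c p = (\<Sum>l<n. w (p l))" for p
  define B where "B = real n ^ 2 * (norm ((1 / real K) *\<^sub>R (\<Sum>a<K. w a)))\<^sup>2 + (1/2) * (\<Sum>a<K. (norm (w a))\<^sup>2)"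
  have e: "(norm (u + \<gamma> *\<^sub>R c p))\<^sup>2 = (norm u)\<^sup>2 + 2 * \<gamma> * (u \<bullet> c p) + \<gamma>\<^sup>2 * (norm (c p))\<^sup>2" for p
    by (simp add: norm_add_sq power_mult_distrib)
  have s1: "(\<Sum>p\<in>?P. u \<bullet> c p) = real n * (fact K * (u \<bullet> ((1 / real K) *\<^sub>R (\<Sum>a<K. w a))))"
  proof -
    have "(\<Sum>p\<in>?P. u \<bullet> c p) = (\<Sum>l<n. \<Sum>p\<in>?P. u \<bullet> w (p l))"
      unfolding c_def inner_sum_right by (rule sum.swap)
    also have "\<dots> = (\<Sum>l<n. fact K * (u \<bullet> ((1 / real K) *\<^sub>R (\<Sum>a<K. w a))))"
    proof (rule sum.cong[OF refl])
      fix l assume "l \<in> {..<n}"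
      then have "l < K" using nK by simp
      from perm_single_sum[OF this, of "\<lambda>a. u \<bullet> w a"]
      have "real K * (\<Sum>p\<in>?P. u \<bullet> w (p l)) = fact K * (\<Sum>a<K. u \<bullet> w a)" .
      then show "(\<Sum>p\<in>?P. u \<bullet> w (p l)) = fact K * (u \<bullet> ((1 / real K) *\<^sub>R (\<Sum>a<K. w a)))"
        using Kp by (simp add: inner_sum_right field_simps)
    qed
    also have "\<dots> = real n * (fact K * (u \<bullet> ((1 / real K) *\<^sub>R (\<Sum>a<K. w a))))" by simp
    finally show ?thesis .
  qed
  have s2: "(\<Sum>p\<in>?P. (norm (c p))\<^sup>2) \<le> fact K * B"
    unfolding c_def B_def by (rule perm_partial_bound[OF nK Kp])
  have "(\<Sum>p\<in>?P. (norm (u + \<gamma> *\<^sub>R c p))\<^sup>2)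
      = fact K * (norm u)\<^sup>2 + 2 * \<gamma> * (\<Sum>p\<in>?P. u \<bullet> c p) + \<gamma>\<^sup>2 * (\<Sum>p\<in>?P. (norm (c p))\<^sup>2)"
    by (simp add: e sum.distrib sum_distrib_left card_permutations)
  also have "\<dots> \<le> fact K * (norm u)\<^sup>2 + 2 * \<gamma> * (\<Sum>p\<in>?P. u \<bullet> c p) + \<gamma>\<^sup>2 * (fact K * B)"
    using s2 by (simp add: mult_left_mono)
  also have "\<dots> = fact K * ((norm u)\<^sup>2 + 2 * \<gamma> * real n * (u \<bullet> ((1 / real K) *\<^sub>R (\<Sum>a<K. w a))) + \<gamma>\<^sup>2 * B)"
    unfolding s1 by (simp add: algebra_simps)
  finally show ?thesis unfolding c_def B_def .
qed


theorem lemma3: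
  fixes f :: "nat \<Rightarrow> nat \<Rightarrow> 'a::euclidean_space \<Rightarrow> real"
    and xs :: 'a and \<gamma> :: real and M N C R :: nat
  assumes gamma_pos: "\<gamma> > 0"
    and C_pos: "C > 0" and N_pos: "N > 0"
    and M_eq: "M = C * R"
    and diff: "\<And>m j x. m < M \<Longrightarrow> j < N \<Longrightarrow> f m j differentiable (at x)"
    and minimizer: "\<And>x. (1 / real M) * (\<Sum>m<M. (1 / real N) * (\<Sum>j<N. f m j xs))
                       \<le> (1 / real M) * (\<Sum>m<M. (1 / real N) * (\<Sum>j<N. f m j x))"
    and r_lt: "r < R" and i_lt: "i < C" and j_lt: "j < N"
  shows "measure_pmf.expectation (pmf_of_set (sample_space M N))
           (\<lambda>(\<sigma>, \<pi>). (norm (local_iter \<gamma> (client_steps f xs \<pi> (\<sigma> (r * C + i)))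
                           (star_round \<gamma> N C f xs \<sigma> \<pi> r) (Suc j) - xs))\<^sup>2)
         \<le> \<gamma>\<^sup>2 * (real M * real N ^ 2 / (2 * real C ^ 2) + 2 * real N ^ 2)
              * ((1 / real M) * (\<Sum>m<M. (norm (grad (\<lambda>x. (1 / real N) * (\<Sum>k<N. f m k x)) xs))\<^sup>2))
           + \<gamma>\<^sup>2 * real N / 2
              * ((1 / (real M * real N)) * (\<Sum>m<M. \<Sum>k<N. (norm (grad (f m k) xs))\<^sup>2))"
proof -
  have Rp: "R > 0" using r_lt by simp
  have Mp: "M > 0" using M_eq C_pos Rp by simp
  define G where "G m k = grad (f m k) xs" for m k
  define g where "g m = (1 / real N) *\<^sub>R (\<Sum>k<N. G m k)" for m
  define s where "s = r * C"
  define n where "n = Suc j"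
  define P where "P = {\<sigma>. \<sigma> permutes {..<M}}"
  define Q where "Q = PiE {..<M} (\<lambda>_. {p. p permutes {..<N}})"
  define A where "A \<sigma> = (\<Sum>l<s. g (\<sigma> l))" for \<sigma>
  define u where "u \<sigma> = (\<gamma> * real N / real C) *\<^sub>R A \<sigma>" for \<sigma>
  define Dg where "Dg = (\<Sum>m<M. (norm (g m))\<^sup>2)"
  define DG where "DG = (\<Sum>m<M. \<Sum>k<N. (norm (G m k))\<^sup>2)"
  define B where "B m = real n ^ 2 * (norm (g m))\<^sup>2 + (1/2) * (\<Sum>a<N. (norm (G m a))\<^sup>2)" for m
  define W where "W \<sigma> = (norm (u \<sigma>))\<^sup>2 + 2 * \<gamma> * real n * (u \<sigma> \<bullet> g (\<sigma> (s + i))) + \<gamma>\<^sup>2 * B (\<sigma> (s + i))" for \<sigma>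
  define \<Phi> where "\<Phi> \<sigma> \<pi> = (norm (local_iter \<gamma> (client_steps f xs \<pi> (\<sigma> (r * C + i)))
                           (star_round \<gamma> N C f xs \<sigma> \<pi> r) (Suc j) - xs))\<^sup>2" for \<sigma> \<pi>
  define \<Psi> where "\<Psi> \<sigma> p = (norm (u \<sigma> + \<gamma> *\<^sub>R (\<Sum>l<n. G (\<sigma> (s + i)) (p l))))\<^sup>2" for \<sigma> p
  have sM: "s + i < M"
  proof -
    have "s + i < r * C + C" unfolding s_def using i_lt by simp
    also have "\<dots> = Suc r * C" by simp
    also have "\<dots> \<le> R * C" using r_lt by (intro mult_right_mono) auto
    finally show ?thesis using M_eq by (simp add: mult.commute)
  qed
  have sle: "r * C \<le> M" using sM unfolding s_def by simp
  have nN: "n \<le> N" unfolding n_def using j_lt by simp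
  have Dg0: "Dg \<ge> 0" unfolding Dg_def by (simp add: sum_nonneg)
  have gsum0: "(\<Sum>m<M. g m) = 0"
  proof -
    have "(\<Sum>m<M. \<Sum>k<N. G m k) = 0" unfolding G_def
      by (rule grad_zero_sum[OF Mp N_pos diff minimizer])
    then show ?thesis unfolding g_def by (simp add: scaleR_sum_right[symmetric])
  qed
  have ggrad: "grad (\<lambda>x. (1 / real N) * (\<Sum>k<N. f m k x)) xs = g m" if "m < M" for m
    unfolding g_def G_def
    by (intro gderiv_grad GDERIV_cmult GDERIV_sum grad_GDERIV diff finite_lessThan that) auto
  have finP: "finite P" unfolding P_def by (simp add: finite_permutations)
  have finQ: "finite Q" unfolding Q_def by (simp add: finite_PiE finite_permutations)
  have cardP: "card P = fact M" unfolding P_def by (simp add: card_permutations)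
  have cardQ: "card Q = fact N ^ M" unfolding Q_def by (simp add: card_PiE card_permutations)
  have PQne: "P \<times> Q \<noteq> {}"
  proof -
    have "id \<in> P" unfolding P_def by (simp add: permutes_id)
    moreover have "(\<lambda>m\<in>{..<M}. id) \<in> Q" unfolding Q_def by (simp add: permutes_id)
    ultimately show ?thesis by blast
  qed
  have SS: "sample_space M N = P \<times> Q" unfolding sample_space_def P_def Q_def by simp

  have integrand: "\<Phi> \<sigma> \<pi> = \<Psi> \<sigma> (\<pi> (\<sigma> (s + i)))" if \<sigma>: "\<sigma> \<in> P" and \<pi>: "\<pi> \<in> Q" for \<sigma> \<pi>
  proof -
    have sp: "\<sigma> permutes {..<M}" using \<sigma> unfolding P_def by simp
    have pp: "\<And>m. m < M \<Longrightarrow> \<pi> m permutes {..<N}" using \<pi> unfolding Q_def by (auto simp: PiE_iff)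
    have sr: "star_round \<gamma> N C f xs \<sigma> \<pi> r = xs - u \<sigma>"
      unfolding u_def A_def g_def G_def s_def
      using star_round_eq[where \<pi>=\<pi> and \<gamma>=\<gamma> and f=f and xs=xs, OF sp pp N_pos C_pos sle] by simp
    have "local_iter \<gamma> (client_steps f xs \<pi> (\<sigma> (r * C + i))) (star_round \<gamma> N C f xs \<sigma> \<pi> r) (Suc j) - xs
        = - (u \<sigma> + \<gamma> *\<^sub>R (\<Sum>l<n. G (\<sigma> (s + i)) (\<pi> (\<sigma> (s + i)) l)))"
      unfolding local_iter_eq sr client_steps_def G_def s_def n_def by (simp add: algebra_simps)
    then show ?thesis unfolding \<Phi>_def \<Psi>_def by (simp only: norm_minus_cancel)
  qed

  have E: "measure_pmf.expectation (pmf_of_set (sample_space M N)) (\<lambda>(\<sigma>, \<pi>). \<Phi> \<sigma> \<pi>)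
      = (\<Sum>\<sigma>\<in>P. \<Sum>\<pi>\<in>Q. \<Phi> \<sigma> \<pi>) / (fact M * fact N ^ M)"
  proof -
    have "measure_pmf.expectation (pmf_of_set (P \<times> Q)) (\<lambda>(\<sigma>, \<pi>). \<Phi> \<sigma> \<pi>)
        = (\<Sum>x\<in>P \<times> Q. (\<lambda>(\<sigma>, \<pi>). \<Phi> \<sigma> \<pi>) x) / real (card (P \<times> Q))"
      by (rule integral_pmf_of_set[OF PQne]) (simp add: finP finQ)
    also have "(\<Sum>x\<in>P \<times> Q. (\<lambda>(\<sigma>, \<pi>). \<Phi> \<sigma> \<pi>) x) = (\<Sum>\<sigma>\<in>P. \<Sum>\<pi>\<in>Q. \<Phi> \<sigma> \<pi>)"
      by (rule sum.cartesian_product[symmetric])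
    also have "real (card (P \<times> Q)) = fact M * fact N ^ M"
      by (simp add: card_cartesian_product cardP cardQ)
    finally show ?thesis unfolding SS .
  qed

  have inner: "(\<Sum>\<pi>\<in>Q. \<Phi> \<sigma> \<pi>) \<le> fact N ^ M * W \<sigma>" if \<sigma>: "\<sigma> \<in> P" for \<sigma>
  proof -
    have mM: "\<sigma> (s + i) < M" using \<sigma> sM permutes_in_image[of \<sigma> "{..<M}"] unfolding P_def by simp
    have "(\<Sum>\<pi>\<in>Q. \<Phi> \<sigma> \<pi>) = (\<Sum>\<pi>\<in>Q. \<Psi> \<sigma> (\<pi> (\<sigma> (s + i))))"
      using integrand[OF \<sigma>] by simp
    also have "\<dots> = real (card {p. p permutes {..<N}}) ^ (card {..<M} - 1) * (\<Sum>p\<in>{p. p permutes {..<N}}. \<Psi> \<sigma> p)"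
      unfolding Q_def using mM by (intro sum_PiE_component) (auto simp: finite_permutations)
    also have "\<dots> = fact N ^ (M - 1) * (\<Sum>p\<in>{p. p permutes {..<N}}. \<Psi> \<sigma> p)"
      by (simp add: card_permutations)
    also have "\<dots> \<le> fact N ^ (M - 1) * (fact N * W \<sigma>)"
    proof (rule mult_left_mono)
      show "(\<Sum>p\<in>{p. p permutes {..<N}}. \<Psi> \<sigma> p) \<le> fact N * W \<sigma>"
        unfolding \<Psi>_def W_def B_def g_def[of "\<sigma> (s + i)"]
        using inner_step[OF nN N_pos, of "u \<sigma>" \<gamma> "G (\<sigma> (s + i))"] by simp
    qed simp
    also have "\<dots> = fact N ^ M * W \<sigma>"
      using Mp by (simp add: power_eq_if)
    finally show ?thesis .
  qed

  have a: "(\<Sum>\<sigma>\<in>P. (norm (u \<sigma>))\<^sup>2) \<le> (\<gamma> * real N / real C)\<^sup>2 * (fact M * ((1/2) * Dg))"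
  proof -
    have "(\<Sum>\<sigma>\<in>P. (norm (u \<sigma>))\<^sup>2) = (\<gamma> * real N / real C)\<^sup>2 * (\<Sum>\<sigma>\<in>P. (norm (A \<sigma>))\<^sup>2)"
    proof -
      have "(norm (u \<sigma>))\<^sup>2 = (\<gamma> * real N / real C)\<^sup>2 * (norm (A \<sigma>))\<^sup>2" for \<sigma>
        unfolding u_def by (simp add: power_mult_distrib power_divide power2_abs)
      then show ?thesis by (simp add: sum_distrib_left)
    qed
    also have "\<dots> \<le> (\<gamma> * real N / real C)\<^sup>2 * (fact M * ((1/2) * Dg))"
    proof (rule mult_left_mono)
      have "(\<Sum>\<sigma>\<in>P. (norm (A \<sigma>))\<^sup>2) \<le> fact M * (real s ^ 2 * (norm ((1 / real M) *\<^sub>R (\<Sum>a<M. g a)))\<^sup>2 + (1/2) * Dg)"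
        unfolding P_def A_def Dg_def using sle s_def by (intro perm_partial_bound Mp) simp
      then show "(\<Sum>\<sigma>\<in>P. (norm (A \<sigma>))\<^sup>2) \<le> fact M * ((1/2) * Dg)" using gsum0 by simp
    qed simp
    finally show ?thesis .
  qed
  have b: "(\<Sum>\<sigma>\<in>P. u \<sigma> \<bullet> g (\<sigma> (s + i))) \<le> 0"
  proof -
    have "(\<Sum>\<sigma>\<in>P. u \<sigma> \<bullet> g (\<sigma> (s + i))) = (\<gamma> * real N / real C) * (\<Sum>l<s. \<Sum>\<sigma>\<in>P. g (\<sigma> l) \<bullet> g (\<sigma> (s + i)))"
      unfolding u_def A_def by (simp add: inner_sum_left sum_distrib_left sum.swap[of _ P])
    also have "\<dots> \<le> 0"
    proof (rule mult_nonneg_nonpos)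
      show "0 \<le> \<gamma> * real N / real C" using gamma_pos by simp
      show "(\<Sum>l<s. \<Sum>\<sigma>\<in>P. g (\<sigma> l) \<bullet> g (\<sigma> (s + i))) \<le> 0"
      proof (rule sum_nonpos)
        fix l assume l: "l \<in> {..<s}"
        then have ll: "l < M" "s + i < M" "l \<noteq> s + i" using sM by auto
        from perm_pair_sum[OF ll, of "\<lambda>a b. g a \<bullet> g b"]
        have eq: "real M * (real M - 1) * (\<Sum>\<sigma>\<in>P. g (\<sigma> l) \<bullet> g (\<sigma> (s + i)))
            = fact M * ((\<Sum>a<M. \<Sum>b<M. g a \<bullet> g b) - (\<Sum>a<M. g a \<bullet> g a))" unfolding P_def .
        have "(\<Sum>a<M. \<Sum>b<M. g a \<bullet> g b) = (\<Sum>a<M. g a) \<bullet> (\<Sum>b<M. g b)"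
          by (simp add: inner_sum_left inner_sum_right) (rule sum.swap)
        also have "\<dots> = 0" using gsum0 by simp
        finally have "(\<Sum>a<M. \<Sum>b<M. g a \<bullet> g b) - (\<Sum>a<M. g a \<bullet> g a) \<le> 0"
          by (simp add: sum_nonneg)
        then have "real M * (real M - 1) * (\<Sum>\<sigma>\<in>P. g (\<sigma> l) \<bullet> g (\<sigma> (s + i))) \<le> 0"
          unfolding eq by (simp add: mult_nonneg_nonpos)
        moreover have "real M * (real M - 1) > 0" using ll by simp
        ultimately show "(\<Sum>\<sigma>\<in>P. g (\<sigma> l) \<bullet> g (\<sigma> (s + i))) \<le> 0"
          by (metis linorder_not_le mult_pos_pos)
      qed
    qed
    finally show ?thesis .
  qed
  have c: "real M * (\<Sum>\<sigma>\<in>P. B (\<sigma> (s + i))) = fact M * (real n ^ 2 * Dg + (1/2) * DG)"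
  proof -
    have "real M * (\<Sum>\<sigma>\<in>P. B (\<sigma> (s + i))) = fact M * (\<Sum>m<M. B m)"
      unfolding P_def by (rule perm_single_sum[OF sM])
    also have "(\<Sum>m<M. B m) = real n ^ 2 * Dg + (1/2) * DG"
      unfolding B_def Dg_def DG_def by (simp add: sum.distrib sum_distrib_left)
    finally show ?thesis .
  qed
  have sumW: "(\<Sum>\<sigma>\<in>P. W \<sigma>) \<le> fact M * ((\<gamma> * real N / real C)\<^sup>2 * ((1/2) * Dg) + \<gamma>\<^sup>2 / real M * (real n ^ 2 * Dg + (1/2) * DG))"
  proof -
    define Z where "Z = real n ^ 2 * Dg + (1/2) * DG"
    have eqW: "(\<Sum>\<sigma>\<in>P. W \<sigma>) = (\<Sum>\<sigma>\<in>P. (norm (u \<sigma>))\<^sup>2) + 2 * \<gamma> * real n * (\<Sum>\<sigma>\<in>P. u \<sigma> \<bullet> g (\<sigma> (s + i)))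
        + \<gamma>\<^sup>2 * (\<Sum>\<sigma>\<in>P. B (\<sigma> (s + i)))"
      unfolding W_def by (simp add: sum.distrib sum_distrib_left mult.assoc)
    have eB: "(\<Sum>\<sigma>\<in>P. B (\<sigma> (s + i))) = fact M * Z / real M"
      using c Mp unfolding Z_def by (simp add: field_simps)
    have Y: "2 * \<gamma> * real n * (\<Sum>\<sigma>\<in>P. u \<sigma> \<bullet> g (\<sigma> (s + i))) \<le> 0"
      using b gamma_pos by (simp add: mult_nonneg_nonpos)
    have tgt: "fact M * ((\<gamma> * real N / real C)\<^sup>2 * ((1/2) * Dg) + \<gamma>\<^sup>2 / real M * Z)
        = (\<gamma> * real N / real C)\<^sup>2 * (fact M * ((1/2) * Dg)) + \<gamma>\<^sup>2 * (fact M * Z / real M)"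
      by (simp add: field_simps)
    have eqW': "(\<Sum>\<sigma>\<in>P. W \<sigma>) = (\<Sum>\<sigma>\<in>P. (norm (u \<sigma>))\<^sup>2) + 2 * \<gamma> * real n * (\<Sum>\<sigma>\<in>P. u \<sigma> \<bullet> g (\<sigma> (s + i)))
        + \<gamma>\<^sup>2 * (fact M * Z / real M)" using eqW unfolding eB .
    show ?thesis using eqW' Y tgt a unfolding Z_def[symmetric] by linarith
  qed

  have "(\<Sum>\<sigma>\<in>P. \<Sum>\<pi>\<in>Q. \<Phi> \<sigma> \<pi>) \<le> (\<Sum>\<sigma>\<in>P. fact N ^ M * W \<sigma>)"
    by (rule sum_mono) (rule inner)
  also have "\<dots> = fact N ^ M * (\<Sum>\<sigma>\<in>P. W \<sigma>)" by (simp add: sum_distrib_left)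
  also have "\<dots> \<le> fact N ^ M * (fact M * ((\<gamma> * real N / real C)\<^sup>2 * ((1/2) * Dg) + \<gamma>\<^sup>2 / real M * (real n ^ 2 * Dg + (1/2) * DG)))"
    by (rule mult_left_mono[OF sumW]) simp
  finally have tot: "(\<Sum>\<sigma>\<in>P. \<Sum>\<pi>\<in>Q. \<Phi> \<sigma> \<pi>) / (fact M * fact N ^ M)
      \<le> (\<gamma> * real N / real C)\<^sup>2 * ((1/2) * Dg) + \<gamma>\<^sup>2 / real M * (real n ^ 2 * Dg + (1/2) * DG)"
    by (simp add: pos_divide_le_eq algebra_simps)
  have gg: "(\<Sum>m<M. (norm (grad (\<lambda>x. (1 / real N) * (\<Sum>k<N. f m k x)) xs))\<^sup>2) = Dg"
    unfolding Dg_def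
  proof (intro sum.cong refl)
    fix m assume "m \<in> {..<M}"
    then show "(norm (grad (\<lambda>x. (1 / real N) * (\<Sum>k<N. f m k x)) xs))\<^sup>2 = (norm (g m))\<^sup>2"
      using ggrad[of m] by simp
  qed
  have n2: "real n ^ 2 \<le> 2 * real N ^ 2"
  proof -
    have "real n ^ 2 \<le> real N ^ 2" using nN by (intro power_mono) auto
    moreover have "real N ^ 2 \<ge> 0" by simp
    ultimately show ?thesis by linarith
  qed
  have fin: "(\<gamma> * real N / real C)\<^sup>2 * ((1/2) * Dg) + \<gamma>\<^sup>2 / real M * (real n ^ 2 * Dg + (1/2) * DG)
      \<le> \<gamma>\<^sup>2 * (real M * real N ^ 2 / (2 * real C ^ 2) + 2 * real N ^ 2) * ((1 / real M) * Dg)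
        + \<gamma>\<^sup>2 * real N / 2 * ((1 / (real M * real N)) * DG)"
  proof -
    have e1: "(\<gamma> * real N / real C)\<^sup>2 * ((1/2) * Dg) = \<gamma>\<^sup>2 * (real M * real N ^ 2 / (2 * real C ^ 2)) * ((1 / real M) * Dg)"
      using Mp C_pos by (simp add: field_simps power2_eq_square)
    have e2: "\<gamma>\<^sup>2 / real M * ((1/2) * DG) = \<gamma>\<^sup>2 * real N / 2 * ((1 / (real M * real N)) * DG)"
      using Mp N_pos by (simp add: field_simps)
    have e3: "\<gamma>\<^sup>2 / real M * (real n ^ 2 * Dg) \<le> \<gamma>\<^sup>2 * (2 * real N ^ 2) * ((1 / real M) * Dg)"
    proof -
      have "\<gamma>\<^sup>2 / real M * (real n ^ 2 * Dg) = (\<gamma>\<^sup>2 / real M * Dg) * real n ^ 2" by simp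
      also have "\<dots> \<le> (\<gamma>\<^sup>2 / real M * Dg) * (2 * real N ^ 2)"
        using n2 Dg0 Mp by (intro mult_left_mono) auto
      also have "\<dots> = \<gamma>\<^sup>2 * (2 * real N ^ 2) * ((1 / real M) * Dg)" by simp
      finally show ?thesis .
    qed
    show ?thesis using e1 e2 e3 by (simp add: algebra_simps)
  qed
  show ?thesis
    using E tot fin unfolding \<Phi>_def gg DG_def G_def by simp
qed

end
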